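(* Let $G$ be an almost simple group with socle $G_0=\mathrm{P}\Omega_{10}^+(q)$ and let $H$ be a $\mathcal{C}_2$-subgroup of type $O_2^+(q)\wr S_5$, i.e. the stabiliser in $G$ of an orthogonal decomposition $V=V_1\perp V_2\perp V_3\perp V_4\perp V_5$ of the natural $10$-dimensional orthogonal module $V$ into nondegenerate $2$-spaces of plus-type. If $q\geqslant 8$, then $b(G,H)\leqslant 3$.
   Context: A finite group $G$ is almost simple with socle $G_0$ if $G_0\leqslant G\leqslant\mathrm{Aut}(G_0)$ with $G_0$ non-abelian simple. For a subgroup $H\leqslant G$, $H_G=\bigcap_{g\in G}H^g$ is its core and $b(G,H)=\min\{|S| : S\subseteq G,\ \bigcap_{g\in S}H^g=H_G\}$. A nondegenerate $2$-space is of plus-type if it contains a nonzero totally singular vector (equivalently a $1$-dimensional totally singular subspace). *)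

theory Defs
  imports "HOL-Algebra.Algebra" "HOL-Library.Numeral_Type"
begin

type_synonym 'k vect = "10 \<Rightarrow> 'k"

definition vadd :: "'k::field vect \<Rightarrow> 'k vect \<Rightarrow> 'k vect" where
  "vadd x y = (\<lambda>i. x i + y i)"

definition smul :: "'k::field \<Rightarrow> 'k vect \<Rightarrow> 'k vect" where
  "smul c x = (\<lambda>i. c * x i)"

definition vzero :: "'k::field vect" where
  "vzero = (\<lambda>i. 0)"

definition Qf :: "'k::field vect \<Rightarrow> 'k" where
  "Qf x = (\<Sum>j<(5::nat). x (of_nat (2*j)) * x (of_nat (2*j+1)))"

definition Bf :: "'k::field vect \<Rightarrow> 'k vect \<Rightarrow> 'k" where
  "Bf x y = Qf (vadd x y) - Qf x - Qf y"

definition field_aut :: "('k::field \<Rightarrow> 'k) \<Rightarrow> bool" where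
  "field_aut s \<longleftrightarrow> bij s \<and> (\<forall>a b. s (a + b) = s a + s b \<and> s (a * b) = s a * s b)"

definition semisim :: "('k::field vect \<Rightarrow> 'k vect) \<Rightarrow> bool" where
  "semisim g \<longleftrightarrow> bij g \<and> (\<exists>s lam. field_aut s \<and> lam \<noteq> 0 \<and>
     (\<forall>x y. g (vadd x y) = vadd (g x) (g y)) \<and>
     (\<forall>c x. g (smul c x) = smul (s c) (g x)) \<and>
     (\<forall>x. Qf (g x) = lam * s (Qf x)))"

definition isometry :: "('k::field vect \<Rightarrow> 'k vect) \<Rightarrow> bool" where
  "isometry g \<longleftrightarrow> bij g \<and>
     (\<forall>x y. g (vadd x y) = vadd (g x) (g y)) \<and>
     (\<forall>c x. g (smul c x) = smul c (g x)) \<and>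
     (\<forall>x. Qf (g x) = Qf x)"

definition GammaO :: "('k::field vect \<Rightarrow> 'k vect) monoid" where
  "GammaO = \<lparr>carrier = {g. semisim g}, monoid.mult = (\<circ>), one = id\<rparr>"

definition OrthGrp :: "('k::field vect \<Rightarrow> 'k vect) monoid" where
  "OrthGrp = \<lparr>carrier = {g. isometry g}, monoid.mult = (\<circ>), one = id\<rparr>"

definition Omega :: "('k::field vect \<Rightarrow> 'k vect) set" where
  "Omega = derived OrthGrp (carrier OrthGrp)"

text \<open>Nonzero scalar maps; the kernel of Gamma O \<rightarrow> P Gamma O.\<close>
definition Scalars :: "('k::field vect \<Rightarrow> 'k vect) set" where
  "Scalars = {g. \<exists>c. c \<noteq> (0::'k) \<and> g = smul c}"

definition subspace :: "'k::field vect set \<Rightarrow> bool" where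
  "subspace W \<longleftrightarrow> vzero \<in> W \<and> (\<forall>x\<in>W. \<forall>y\<in>W. vadd x y \<in> W) \<and> (\<forall>c. \<forall>x\<in>W. smul c x \<in> W)"

definition two_space :: "'k::field vect set \<Rightarrow> bool" where
  "two_space W \<longleftrightarrow> (\<exists>u v. W = {vadd (smul a u) (smul b v) | a b. True} \<and>
      (\<forall>a b. vadd (smul a u) (smul b v) = vzero \<longrightarrow> a = 0 \<and> b = 0))"

definition nondegenerate :: "'k::field vect set \<Rightarrow> bool" where
  "nondegenerate W \<longleftrightarrow> (\<forall>x\<in>W. (\<forall>y\<in>W. Bf x y = 0) \<longrightarrow> x = vzero)"

definition plus_type_2space :: "'k::field vect set \<Rightarrow> bool" where
  "plus_type_2space W \<longleftrightarrow> two_space W \<and> nondegenerate W \<and> (\<exists>v\<in>W. v \<noteq> vzero \<and> Qf v = 0)"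

definition plus_decomp :: "'k::field vect set set \<Rightarrow> bool" where
  "plus_decomp D \<longleftrightarrow> card D = 5 \<and> (\<forall>W\<in>D. plus_type_2space W) \<and>
     (\<forall>W\<in>D. \<forall>W'\<in>D. W \<noteq> W' \<longrightarrow> (\<forall>x\<in>W. \<forall>y\<in>W'. Bf x y = 0)) \<and>
     (\<forall>x. \<exists>f. (\<forall>W\<in>D. f W \<in> W) \<and> x = foldr vadd (map f (SOME l. set l = D \<and> distinct l)) vzero)"

definition decomp_stab :: "('k::field vect \<Rightarrow> 'k vect) set \<Rightarrow> 'k vect set set \<Rightarrow> ('k vect \<Rightarrow> 'k vect) set" where
  "decomp_stab G D = {g\<in>G. \<forall>W\<in>D. g ` W \<in> D}"

definition conjg :: "('a, 'b) monoid_scheme \<Rightarrow> 'a set \<Rightarrow> 'a \<Rightarrow> 'a set" where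
  "conjg G H g = {inv\<^bsub>G\<^esub> g \<otimes>\<^bsub>G\<^esub> h \<otimes>\<^bsub>G\<^esub> g | h. h \<in> H}"

definition core :: "('a, 'b) monoid_scheme \<Rightarrow> 'a set \<Rightarrow> 'a set" where
  "core G H = carrier G \<inter> (\<Inter>g\<in>carrier G. conjg G H g)"

definition base_size :: "('a, 'b) monoid_scheme \<Rightarrow> 'a set \<Rightarrow> nat" where
  "base_size G H = (LEAST n. \<exists>S. S \<subseteq> carrier G \<and> finite S \<and> card S = n \<and>
      carrier G \<inter> (\<Inter>g\<in>S. conjg G H g) = core G H)"

end

theory Submission
  imports Defs "HOL-Library.Function_Algebras"
begin

lemma x10: "(x::10) = 0 \<or> x = 1 \<or> x = 2 \<or> x = 3 \<or> x = 4 \<or> x = 5 \<or> x = 6 \<or> x = 7 \<or> x = 8 \<or> x = 9"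
proof (cases x)
  case (of_int z)
  then have "z = 0 \<or> z = 1 \<or> z = 2 \<or> z = 3 \<or> z = 4 \<or> z = 5 \<or> z = 6 \<or> z = 7 \<or> z = 8 \<or> z = 9" by auto
  then show ?thesis using of_int by auto
qed

lemma UNIV_10: "(UNIV::10 set) = {0,1,2,3,4,5,6,7,8,9}"
  using x10 by auto


definition tyring :: "'a::field ring" where
  "tyring = \<lparr>carrier = UNIV, monoid.mult = (\<lambda>x y. x * y), one = 1, ring.zero = 0, add = (\<lambda>x y. x + y)\<rparr>"

lemma tyring_field: "field (tyring :: 'a::field ring)"
proof -
  have "\<exists>y. x + y = 0" for x :: 'a
    using add.right_inverse by blast
  moreover have "x \<noteq> 0 \<Longrightarrow> \<exists>y. x * y = 1" for x :: 'a
    by (rule exI[of _ "inverse x"]) auto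
  ultimately show ?thesis
    unfolding tyring_def using add.right_inverse
    by unfold_locales (auto simp: algebra_simps Units_def)
qed

lemma tyring_pow: "x [^]\<^bsub>(tyring::'a::field ring)\<^esub> (n::nat) = x ^ n"
  by (induction n) (simp_all add: tyring_def)

lemma gen_exists: "\<exists>t::'a::{field,finite}. t \<noteq> 0 \<and> (\<forall>x. x \<noteq> 0 \<longrightarrow> (\<exists>n::nat. x = t ^ n))"
proof -
  interpret F: field "tyring :: 'a ring" by (rule tyring_field)
  have fin: "finite (carrier (tyring::'a ring))" by (simp add: tyring_def)
  note gg = F.finite_field_mult_group_has_gen[OF fin]
  from gg obtain a where
    a: "a \<in> carrier (Multiplicative_Group.mult_of (tyring::'a ring))"
    "carrier (Multiplicative_Group.mult_of (tyring::'a ring)) = {a[^]\<^bsub>tyring\<^esub> i | i::nat . i \<in> UNIV}" by (rule bexE)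
  have c: "carrier (Multiplicative_Group.mult_of (tyring::'a ring)) = UNIV - {0}" by (simp add: tyring_def)
  show ?thesis
  proof (rule exI[of _ a], intro conjI allI impI)
    show "a \<noteq> 0" using a(1) c by auto
    fix x :: 'a assume "x \<noteq> 0"
    then have "x \<in> carrier (Multiplicative_Group.mult_of (tyring::'a ring))" using c by auto
    then obtain i::nat where "x = a[^]\<^bsub>tyring\<^esub> i" using a(2) by auto
    then show "\<exists>n. x = a ^ n" by (auto simp: tyring_pow)
  qed
qed

definition dl :: "10 \<Rightarrow> 'k::field vect" where
  "dl j = (\<lambda>i. if i = j then 1 else 0)"

definition supp :: "'k::field vect \<Rightarrow> 10 set" where
  "supp y = {i. y i \<noteq> 0}"

lemma Qf_expand: "Qf x = x 0 * x 1 + x 2 * x 3 + x 4 * x 5 + x 6 * x 7 + x 8 * x 9"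
  by (simp add: Qf_def numeral_eq_Suc lessThan_Suc add.assoc)

lemma vadd_eq: "vadd x y = x + y"
  by (simp add: vadd_def plus_fun_def)

lemma vzero_eq: "vzero = 0"
  by (simp add: vzero_def zero_fun_def)

lemma sum_app: "(\<Sum>a\<in>A. f a) (i::'b) = (\<Sum>a\<in>A. (f a i :: 'c::comm_monoid_add))"
  by (induction A rule: infinite_finite_induct) auto

lemma smul_apply[simp]: "smul c x i = c * x i"
  by (simp add: smul_def)

lemma decomp: "(x::'k::field vect) = (\<Sum>j\<in>UNIV. smul (x j) (dl j))"
proof
  fix i
  have "(\<Sum>j\<in>UNIV. smul (x j) (dl j)) i = (\<Sum>j\<in>UNIV. smul (x j) (dl j) i)"
    by (rule sum_app)
  also have "\<dots> = (\<Sum>j\<in>UNIV. (if j = i then x j else 0))"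
    by (rule sum.cong) (auto simp: dl_def)
  also have "\<dots> = x i" by simp
  finally show "x i = (\<Sum>j\<in>UNIV. smul (x j) (dl j)) i" by simp
qed

lemma smul_add: "smul c (x + y) = smul c x + smul c y"
  by (auto simp: smul_def distrib_left)

lemma smul_smul: "smul c (smul d x) = smul (c * d) x"
  by (auto simp: smul_def)

lemma smul_zero[simp]: "smul c 0 = 0"
  by (auto simp: smul_def)

lemma smul_sum: "smul c (\<Sum>j\<in>A. g j) = (\<Sum>j\<in>A. smul c (g j))"
  by (simp add: fun_eq_iff sum_app sum_distrib_left)

definition addi :: "('k::field vect \<Rightarrow> 'k vect) \<Rightarrow> bool" where
  "addi f \<longleftrightarrow> (\<forall>x y. f (x + y) = f x + f y)"

definition slin :: "('k::field vect \<Rightarrow> 'k vect) \<Rightarrow> ('k \<Rightarrow> 'k) \<Rightarrow> bool" where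
  "slin f s \<longleftrightarrow> addi f \<and> (\<forall>c x. f (smul c x) = smul (s c) (f x))"

lemma addi_zero: assumes "addi f" shows "f 0 = 0"
proof -
  have "f (0 + 0) = f 0 + f 0" using assms unfolding addi_def by blast
  then show ?thesis by simp
qed

lemma addi_sum: assumes "addi f" shows "f (\<Sum>j\<in>A. g j) = (\<Sum>j\<in>A. f (g j))"
proof (induction A rule: infinite_finite_induct)
  case (insert x F)
  have "f (sum g (insert x F)) = f (g x + sum g F)" by (simp only: sum.insert[OF insert(1,2)])
  also have "\<dots> = f (g x) + f (sum g F)" using assms unfolding addi_def by blast
  also have "\<dots> = (\<Sum>j\<in>insert x F. f (g j))" by (simp only: sum.insert[OF insert(1,2)] insert(3))
  finally show ?case .
next
  case (infinite A)
  then show ?case by (simp only: sum.infinite[OF infinite] addi_zero[OF assms])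
qed (simp_all only: sum.empty addi_zero[OF assms])

lemma mono_coord:
  assumes sl: "slin f s" and fd: "\<And>j. f (dl j) = smul (a j) (dl (\<tau> j))" and inj: "inj \<tau>"
  shows "f y (\<tau> j) = a j * s (y j)"
proof -
  have "f y = f (\<Sum>m\<in>UNIV. smul (y m) (dl m))" using decomp[of y] by simp
  also have "\<dots> = (\<Sum>m\<in>UNIV. smul (s (y m)) (smul (a m) (dl (\<tau> m))))"
    using sl by (simp add: slin_def addi_sum fd)
  finally have "f y (\<tau> j) = (\<Sum>m\<in>UNIV. s (y m) * (a m * dl (\<tau> m) (\<tau> j)))"
    by (simp add: sum_app)
  also have "\<dots> = (\<Sum>m\<in>UNIV. if m = j then s (y m) * a m else 0)"
    by (rule sum.cong) (auto simp: dl_def inj_eq[OF inj])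
  finally show ?thesis by simp
qed

lemma supp_mono:
  assumes sl: "slin f s" and fd: "\<And>j. f (dl j) = smul (a j) (dl (\<tau> j))" and inj: "inj \<tau>"
    and az: "\<And>j. a j \<noteq> 0" and s0: "\<And>c. s c = 0 \<longleftrightarrow> c = 0"
  shows "supp (f y) = \<tau> ` supp y"
proof -
  have surj: "surj \<tau>" using finite_UNIV_inj_surj[OF _ inj] by simp
  show ?thesis
  proof (rule subset_antisym; rule subsetI)
    fix i assume "i \<in> supp (f y)"
    obtain j where "i = \<tau> j" using surj by (metis surjD)
    moreover have "y j \<noteq> 0" using \<open>i \<in> supp (f y)\<close> mono_coord[OF sl fd inj, of y j] s0[of "y j"] \<open>i = \<tau> j\<close>
      by (auto simp: supp_def)
    ultimately show "i \<in> \<tau> ` supp y" by (auto simp: supp_def)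
  next
    fix i assume "i \<in> \<tau> ` supp y"
    then obtain j where "i = \<tau> j" "y j \<noteq> 0" by (auto simp: supp_def)
    then show "i \<in> supp (f y)" using mono_coord[OF sl fd inj, of y j] az s0 by (auto simp: supp_def)
  qed
qed

lemma Bf_expand: "Bf x y = x 0 * y 1 + x 1 * y 0 + x 2 * y 3 + x 3 * y 2 + x 4 * y 5 + x 5 * y 4
   + x 6 * y 7 + x 7 * y 6 + x 8 * y 9 + x 9 * y 8"
  by (simp add: Bf_def Qf_expand vadd_def) (simp add: algebra_simps)

lemma Bf_sym: "Bf x y = Bf y x"
  by (simp add: Bf_expand algebra_simps)

lemma Bf_add1: "Bf (x + y) z = Bf x z + Bf y z"
  by (simp add: Bf_expand algebra_simps)

lemma Bf_smul1: "Bf (smul c x) z = c * Bf x z"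
  by (simp add: Bf_expand algebra_simps)

lemma Bf_zero1[simp]: "Bf 0 z = 0"
  by (simp add: Bf_expand)

lemma Bf_sum1: "Bf (\<Sum>j\<in>A. g j) z = (\<Sum>j\<in>A. Bf (g j) z)"
proof (induction A rule: infinite_finite_induct)
  case (insert x F)
  then show ?case by (simp only: sum.insert[OF insert(1,2)] Bf_add1)
qed (simp_all add: Bf_expand)

lemma Qf_add: "Qf (x + y) = Qf x + Qf y + Bf x y"
  by (simp add: Bf_def vadd_eq)

lemma Qf_smul: "Qf (smul c x) = c * c * Qf x"
  by (simp add: Qf_expand algebra_simps)

lemma Bf_self: "Bf x x = 2 * Qf x"
  by (simp add: Bf_expand Qf_expand algebra_simps)


definition cM1 :: "10 \<Rightarrow> 10 set" where
  "cM1 k = (if k = 0 then {0} else if k = 1 then {0,1,3,6,7} else if k = 2 then {0,2,9}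
     else if k = 3 then {3} else if k = 4 then {4} else if k = 5 then {5} else if k = 6 then {0,6}
     else if k = 7 then {0,7} else if k = 8 then {3,8} else {9})"

definition cM2 :: "10 \<Rightarrow> 10 set" where
  "cM2 k = (if k = 0 then {0} else if k = 1 then {1} else if k = 2 then {2}
     else if k = 3 then {3,4,6} else if k = 4 then {4} else if k = 5 then {2,5} else if k = 6 then {6}
     else if k = 7 then {2,7} else if k = 8 then {8} else {9})"

lemma class_inv:
  fixes C :: "10 \<Rightarrow> 10 set"
  assumes inj: "inj \<tau>" and im: "\<And>k. \<tau> ` C k = C (\<tau>' k)"
    and cls: "\<And>k. (k \<in> K) = (card (C k) = w)"
  shows "\<tau> ` (\<Union>k\<in>K. C k) \<subseteq> (\<Union>k\<in>K. C k)"
proof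
  fix y assume "y \<in> \<tau> ` (\<Union>k\<in>K. C k)"
  then obtain x k where xk: "k \<in> K" "x \<in> C k" "y = \<tau> x" by auto
  have "card (C (\<tau>' k)) = card (\<tau> ` C k)" using im by simp
  also have "\<dots> = card (C k)" using inj by (simp add: card_image inj_on_subset)
  finally have "\<tau>' k \<in> K" using cls xk(1) by simp
  moreover have "y \<in> C (\<tau>' k)" using xk im by blast
  ultimately show "y \<in> (\<Union>k\<in>K. C k)" by blast
qed

lemma inv_iff:
  fixes S :: "10 set"
  assumes inj: "inj \<tau>" and sub: "\<tau> ` S \<subseteq> S"
  shows "(\<tau> j \<in> S) = (j \<in> S)"
proof -
  have eq: "\<tau> ` S = S" using endo_inj_surj[OF _ sub] inj by (simp add: inj_on_subset)
  show ?thesis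
  proof
    assume "\<tau> j \<in> S"
    then have "\<tau> j \<in> \<tau> ` S" using eq by simp
    then show "j \<in> S" using inj by (auto dest: injD)
  next
    assume "j \<in> S" then show "\<tau> j \<in> S" using sub by auto
  qed
qed

lemma code_inj:
  fixes i i' :: 10
  assumes "(i \<in> {0,3,4,5,9}) = (i' \<in> {0,3,4,5,9})"
    "(i \<in> {0,1,3,6,7}) = (i' \<in> {0,1,3,6,7})"
    "(i \<in> {0,2,9}) = (i' \<in> {0,2,9})"
    "(i \<in> {0,3,6,7,8}) = (i' \<in> {0,3,6,7,8})"
    "(i \<in> {0,1,2,4,6,8,9}) = (i' \<in> {0,1,2,4,6,8,9})"
    "(i \<in> {3,4,6}) = (i' \<in> {3,4,6})"
    "(i \<in> {2,5,7}) = (i' \<in> {2,5,7})"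
  shows "i = i'"
  using x10[of i] x10[of i'] assms by (elim disjE) simp_all

lemma comb:
  fixes \<tau> \<tau>1 \<tau>2 :: "10 \<Rightarrow> 10"
  assumes inj: "inj \<tau>" and i1: "\<And>k. \<tau> ` cM1 k = cM1 (\<tau>1 k)" and i2: "\<And>k. \<tau> ` cM2 k = cM2 (\<tau>2 k)"
  shows "\<tau> = id" "\<tau>1 1 = 1" "\<tau>1 2 = 2" "\<tau>1 6 = 6" "\<tau>1 8 = 8" "\<tau>2 3 = 3" "\<tau>2 5 = 5" "\<tau>2 7 = 7"
proof -
  have a1: "\<tau> ` (\<Union>k\<in>{0,3,4,5,9}. cM1 k) \<subseteq> (\<Union>k\<in>{0,3,4,5,9}. cM1 k)"
    by (rule class_inv[where C=cM1 and \<tau>'=\<tau>1 and w=1, OF inj i1]) (use x10 in \<open>auto simp: cM1_def\<close>)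
  have a2: "\<tau> ` (\<Union>k\<in>{1}. cM1 k) \<subseteq> (\<Union>k\<in>{1}. cM1 k)"
    by (rule class_inv[where C=cM1 and \<tau>'=\<tau>1 and w=5, OF inj i1]) (use x10 in \<open>auto simp: cM1_def\<close>)
  have a3: "\<tau> ` (\<Union>k\<in>{2}. cM1 k) \<subseteq> (\<Union>k\<in>{2}. cM1 k)"
    by (rule class_inv[where C=cM1 and \<tau>'=\<tau>1 and w=3, OF inj i1]) (use x10 in \<open>auto simp: cM1_def\<close>)
  have a4: "\<tau> ` (\<Union>k\<in>{6,7,8}. cM1 k) \<subseteq> (\<Union>k\<in>{6,7,8}. cM1 k)"
    by (rule class_inv[where C=cM1 and \<tau>'=\<tau>1 and w=2, OF inj i1]) (use x10 in \<open>auto simp: cM1_def\<close>)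
  have b1: "\<tau> ` (\<Union>k\<in>{0,1,2,4,6,8,9}. cM2 k) \<subseteq> (\<Union>k\<in>{0,1,2,4,6,8,9}. cM2 k)"
    by (rule class_inv[where C=cM2 and \<tau>'=\<tau>2 and w=1, OF inj i2]) (use x10 in \<open>auto simp: cM2_def\<close>)
  have b2: "\<tau> ` (\<Union>k\<in>{3}. cM2 k) \<subseteq> (\<Union>k\<in>{3}. cM2 k)"
    by (rule class_inv[where C=cM2 and \<tau>'=\<tau>2 and w=3, OF inj i2]) (use x10 in \<open>auto simp: cM2_def\<close>)
  have b3: "\<tau> ` (\<Union>k\<in>{5,7}. cM2 k) \<subseteq> (\<Union>k\<in>{5,7}. cM2 k)"
    by (rule class_inv[where C=cM2 and \<tau>'=\<tau>2 and w=2, OF inj i2]) (use x10 in \<open>auto simp: cM2_def\<close>)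
  have u: "(\<Union>k\<in>{0,3,4,5,9}. cM1 k) = {0,3,4,5,9}" "(\<Union>k\<in>{1}. cM1 k) = {0,1,3,6,7}"
    "(\<Union>k\<in>{2}. cM1 k) = {0,2,9}" "(\<Union>k\<in>{6,7,8}. cM1 k) = {0,3,6,7,8}"
    "(\<Union>k\<in>{0,1,2,4,6,8,9}. cM2 k) = {0,1,2,4,6,8,9}" "(\<Union>k\<in>{3}. cM2 k) = {3,4,6}"
    "(\<Union>k\<in>{5,7}. cM2 k) = {2,5,7}"
    by (auto simp: cM1_def cM2_def)
  show t: "\<tau> = id"
  proof
    fix j
    show "\<tau> j = id j"
      using code_inj[of "\<tau> j" j] inv_iff[OF inj a1[unfolded u]] inv_iff[OF inj a2[unfolded u]]
        inv_iff[OF inj a3[unfolded u]] inv_iff[OF inj a4[unfolded u]] inv_iff[OF inj b1[unfolded u]]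
        inv_iff[OF inj b2[unfolded u]] inv_iff[OF inj b3[unfolded u]]
      by simp
  qed
  have e1: "cM1 (\<tau>1 k) = cM1 k" for k using i1[of k] t by simp
  have e2: "cM2 (\<tau>2 k) = cM2 k" for k using i2[of k] t by simp
  have "(1::10) \<in> cM1 (\<tau>1 1)" by (simp only: e1) (simp add: cM1_def)
  then show "\<tau>1 1 = 1" using x10[of "\<tau>1 1"] by (elim disjE) (simp_all add: cM1_def)
  have "(2::10) \<in> cM1 (\<tau>1 2)" by (simp only: e1) (simp add: cM1_def)
  then show "\<tau>1 2 = 2" using x10[of "\<tau>1 2"] by (elim disjE) (simp_all add: cM1_def)
  have "(6::10) \<in> cM1 (\<tau>1 6)" "(1::10) \<notin> cM1 (\<tau>1 6)" by (simp_all only: e1) (simp_all add: cM1_def)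
  then show "\<tau>1 6 = 6" using x10[of "\<tau>1 6"] by (elim disjE) (simp_all add: cM1_def)
  have "(8::10) \<in> cM1 (\<tau>1 8)" by (simp only: e1) (simp add: cM1_def)
  then show "\<tau>1 8 = 8" using x10[of "\<tau>1 8"] by (elim disjE) (simp_all add: cM1_def)
  have "(3::10) \<in> cM2 (\<tau>2 3)" by (simp only: e2) (simp add: cM2_def)
  then show "\<tau>2 3 = 3" using x10[of "\<tau>2 3"] by (elim disjE) (simp_all add: cM2_def)
  have "(5::10) \<in> cM2 (\<tau>2 5)" by (simp only: e2) (simp add: cM2_def)
  then show "\<tau>2 5 = 5" using x10[of "\<tau>2 5"] by (elim disjE) (simp_all add: cM2_def)
  have "(7::10) \<in> cM2 (\<tau>2 7)" by (simp only: e2) (simp add: cM2_def)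
  then show "\<tau>2 7 = 7" using x10[of "\<tau>2 7"] by (elim disjE) (simp_all add: cM2_def)
qed


definition rt :: "10 \<Rightarrow> 10 \<Rightarrow> 10 \<Rightarrow> 10 \<Rightarrow> 'k::field \<Rightarrow> 'k vect \<Rightarrow> 'k vect" where
  "rt a a' b b' s x = (\<lambda>i. if i = a then x a + s * x b else if i = b' then x b' - s * x a' else x i)"

definition tor :: "10 \<Rightarrow> 10 \<Rightarrow> 'k::field \<Rightarrow> 'k vect \<Rightarrow> 'k vect" where
  "tor a a' c x = (\<lambda>i. if i = a then c * x a else if i = a' then inverse c * x a' else x i)"

lemma rt_comp:
  assumes "distinct [a,a',b,b']"
  shows "rt a a' b b' u \<circ> rt a a' b b' v = rt a a' b b' (u + v)"
  using assms by (auto simp: rt_def fun_eq_iff algebra_simps)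

lemma rt_zero: "rt a a' b b' 0 = id"
  by (auto simp: rt_def fun_eq_iff)

lemma tor_comp:
  assumes "a \<noteq> a'"
  shows "tor a a' c \<circ> tor a a' d = tor a a' (c * d)"
  using assms by (auto simp: tor_def fun_eq_iff algebra_simps)

lemma tor_one: "tor a a' 1 = id"
  by (auto simp: tor_def fun_eq_iff)

lemma rt_commutator:
  assumes "distinct [a,a',b,b']" and "c \<noteq> 0" and "c \<noteq> 1"
  shows "rt a a' b b' s = tor a a' c \<circ> rt a a' b b' (s / (c - 1)) \<circ> tor a a' (inverse c) \<circ> rt a a' b b' (- (s / (c - 1)))"
proof -
  have c1: "c - 1 \<noteq> 0" using assms by simp
  have "tor a a' c \<circ> rt a a' b b' (s / (c - 1)) \<circ> tor a a' (inverse c) = rt a a' b b' (c * (s / (c - 1)))"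
    using assms by (auto simp: rt_def tor_def fun_eq_iff algebra_simps)
  then have "tor a a' c \<circ> rt a a' b b' (s / (c - 1)) \<circ> tor a a' (inverse c) \<circ> rt a a' b b' (- (s / (c - 1)))
      = rt a a' b b' (c * (s / (c - 1)) + - (s / (c - 1)))"
    using rt_comp[OF assms(1)] by (metis comp_assoc)
  also have "c * (s / (c - 1)) + - (s / (c - 1)) = (c - 1) * (s / (c - 1))" by (simp add: left_diff_distrib diff_divide_distrib)
  also have "\<dots> = s" using c1 by simp
  finally show ?thesis by (rule sym)
qed

lemma rt_add: "rt a a' b b' s (x + y) = rt a a' b b' s x + rt a a' b b' s y"
  by (auto simp: rt_def fun_eq_iff algebra_simps)
lemma rt_smul: "rt a a' b b' s (smul c x) = smul c (rt a a' b b' s x)"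
  by (auto simp: rt_def fun_eq_iff algebra_simps)
lemma tor_add: "tor a a' s (x + y) = tor a a' s x + tor a a' s y"
  by (auto simp: tor_def fun_eq_iff algebra_simps)
lemma tor_smul: "tor a a' s (smul c x) = smul c (tor a a' s x)"
  by (auto simp: tor_def fun_eq_iff algebra_simps)

lemma Q_r1: "Qf (rt 0 1 6 7 s x) = Qf x" by (simp add: Qf_expand rt_def algebra_simps)
lemma Q_r2: "Qf (rt 0 1 7 6 s x) = Qf x" by (simp add: Qf_expand rt_def algebra_simps)
lemma Q_r3: "Qf (rt 0 1 2 3 s x) = Qf x" by (simp add: Qf_expand rt_def algebra_simps)
lemma Q_r4: "Qf (rt 3 2 8 9 s x) = Qf x" by (simp add: Qf_expand rt_def algebra_simps)
lemma Q_r5: "Qf (rt 6 7 3 2 s x) = Qf x" by (simp add: Qf_expand rt_def algebra_simps)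
lemma Q_r6: "Qf (rt 2 3 5 4 s x) = Qf x" by (simp add: Qf_expand rt_def algebra_simps)
lemma Q_t1: "c \<noteq> 0 \<Longrightarrow> Qf (tor 0 1 c x) = Qf x" by (simp add: Qf_expand tor_def algebra_simps)
lemma Q_t2: "c \<noteq> 0 \<Longrightarrow> Qf (tor 3 2 c x) = Qf x" by (simp add: Qf_expand tor_def algebra_simps)
lemma Q_t3: "c \<noteq> 0 \<Longrightarrow> Qf (tor 6 7 c x) = Qf x" by (simp add: Qf_expand tor_def algebra_simps)
lemma Q_t4: "c \<noteq> 0 \<Longrightarrow> Qf (tor 2 3 c x) = Qf x" by (simp add: Qf_expand tor_def algebra_simps)

definition M1 :: "'k::field \<Rightarrow> 'k vect \<Rightarrow> 'k vect" where
  "M1 t = rt 0 1 6 7 (-1) \<circ> rt 0 1 7 6 t \<circ> rt 0 1 2 3 1 \<circ> rt 3 2 8 9 (-1)"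
definition N1 :: "'k::field \<Rightarrow> 'k vect \<Rightarrow> 'k vect" where
  "N1 t = rt 3 2 8 9 1 \<circ> rt 0 1 2 3 (-1) \<circ> rt 0 1 7 6 (-t) \<circ> rt 0 1 6 7 1"
definition M2 :: "'k::field vect \<Rightarrow> 'k vect" where
  "M2 = rt 6 7 3 2 (-1) \<circ> rt 2 3 5 4 1"
definition N2 :: "'k::field vect \<Rightarrow> 'k vect" where
  "N2 = rt 2 3 5 4 (-1) \<circ> rt 6 7 3 2 1"


lemma M1_exp: "M1 t x = (\<lambda>i. if i = 0 then x 0 + t * x 1 + x 2 - x 6 + t * x 7 else if i = 3 then x 3 - x 1 - x 8
   else if i = 6 then x 6 - t * x 1 else if i = 7 then x 7 + x 1 else if i = 9 then x 9 + x 2 else x i)"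
proof (rule ext)
  fix i show "M1 t x i = (\<lambda>i. if i = 0 then x 0 + t * x 1 + x 2 - x 6 + t * x 7 else if i = 3 then x 3 - x 1 - x 8
   else if i = 6 then x 6 - t * x 1 else if i = 7 then x 7 + x 1 else if i = 9 then x 9 + x 2 else x i) i"
    using x10[of i] by (elim disjE) (simp_all add: M1_def rt_def algebra_simps)
qed
lemma cols1: assumes "t \<noteq> 0" shows "supp (M1 t (dl k)) = cM1 k"
  unfolding supp_def
proof (rule Set.set_eqI)
  fix i show "(i \<in> {i. M1 t (dl k) i \<noteq> 0}) = (i \<in> cM1 k)"
    using x10[of i] x10[of k] assms by (elim disjE) (simp_all add: M1_exp dl_def cM1_def)
qed
lemma M2_exp: "M2 x = (\<lambda>i. if i = 2 then x 2 + x 5 + x 7 else if i = 4 then x 4 - x 3 else if i = 6 then x 6 - x 3 else x i)"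
proof (rule ext)
  fix i show "M2 x i = (\<lambda>i. if i = 2 then x 2 + x 5 + x 7 else if i = 4 then x 4 - x 3 else if i = 6 then x 6 - x 3 else x i) i"
    using x10[of i] by (elim disjE) (simp_all add: M2_def rt_def algebra_simps)
qed
lemma cols2: "supp ((M2::'k::field vect \<Rightarrow> _) (dl k)) = cM2 k"
  unfolding supp_def
proof (rule Set.set_eqI)
  fix i show "(i \<in> {i. (M2::'k::field vect \<Rightarrow> _) (dl k) i \<noteq> 0}) = (i \<in> cM2 k)"
    using x10[of i] x10[of k] by (elim disjE) (simp_all add: M2_exp dl_def cM2_def)
qed

lemma M1N1: "M1 t \<circ> N1 t = id" "N1 t \<circ> M1 t = id"
proof (rule ext, rule ext)
  fix x i show "(M1 t \<circ> N1 t) x i = id x i"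
    using x10[of i] by (elim disjE) (simp_all add: M1_def N1_def rt_def)
next
  show "N1 t \<circ> M1 t = id"
  proof (rule ext, rule ext)
    fix x i show "(N1 t \<circ> M1 t) x i = id x i"
      using x10[of i] by (elim disjE) (simp_all add: M1_def N1_def rt_def)
  qed
qed
lemma M2N2: "M2 \<circ> N2 = id" "N2 \<circ> M2 = id"
proof (rule ext, rule ext)
  fix x i show "(M2 \<circ> N2) x i = id x i"
    using x10[of i] by (elim disjE) (simp_all add: M2_def N2_def rt_def)
next
  show "N2 \<circ> M2 = id"
  proof (rule ext, rule ext)
    fix x i show "(N2 \<circ> M2) x i = id x i"
      using x10[of i] by (elim disjE) (simp_all add: M2_def N2_def rt_def)
  qed
qed

lemma M1_lin: "M1 t (x + y) = M1 t x + M1 t y" "M1 t (smul c x) = smul c (M1 t x)"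
  by (simp_all add: M1_def rt_add rt_smul)
lemma M2_lin: "M2 (x + y) = M2 x + M2 y" "M2 (smul c x) = smul c (M2 x)"
  by (simp_all add: M2_def rt_add rt_smul)

lemma ent1: "M1 t (dl 1) 1 = 1" "M1 t (dl 1) 3 = -1" "M1 t (dl 1) 7 = 1" "M1 t (dl 1) 0 = t"
  "M1 t (dl 2) 0 = 1" "M1 t (dl 2) 2 = 1" "M1 t (dl 2) 9 = 1"
  "M1 t (dl 6) 0 = -1" "M1 t (dl 6) 6 = 1" "M1 t (dl 8) 3 = -1" "M1 t (dl 8) 8 = 1"
  by (simp_all add: M1_exp dl_def)
lemma ent2: "M2 (dl 3) 3 = 1" "M2 (dl 3) 4 = -1" "M2 (dl 3) 6 = -1"
  "M2 (dl 5) 2 = 1" "M2 (dl 5) 5 = 1" "M2 (dl 7) 2 = 1" "M2 (dl 7) 7 = 1"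
  by (simp_all add: M2_exp dl_def)


abbreviation finv :: "('a \<Rightarrow> 'b) \<Rightarrow> 'b \<Rightarrow> 'a" where "finv h \<equiv> inv_into UNIV h"

lemma span_eq: "vadd (smul a u) (smul b v) = (\<lambda>i. a * u i + b * v i)"
  by (simp add: vadd_def smul_def)

lemma two_space_closed:
  assumes "two_space W"
  shows "x \<in> W \<Longrightarrow> y \<in> W \<Longrightarrow> x + y \<in> W" "x \<in> W \<Longrightarrow> smul c x \<in> W"
proof -
  obtain u v where W: "W = {vadd (smul a u) (smul b v) | a b. True}"
    using assms unfolding two_space_def by blast
  show "x \<in> W \<Longrightarrow> y \<in> W \<Longrightarrow> x + y \<in> W"
  proof -
    assume "x \<in> W" "y \<in> W"
    then obtain a1 b1 a2 b2 where "x = vadd (smul a1 u) (smul b1 v)" "y = vadd (smul a2 u) (smul b2 v)"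
      using W by blast
    then have "x + y = vadd (smul (a1 + a2) u) (smul (b1 + b2) v)"
      by (simp add: span_eq fun_eq_iff algebra_simps)
    then show "x + y \<in> W" using W by blast
  qed
  show "x \<in> W \<Longrightarrow> smul c x \<in> W"
  proof -
    assume "x \<in> W"
    then obtain a1 b1 where "x = vadd (smul a1 u) (smul b1 v)"
      using W by blast
    then have "smul c x = vadd (smul (c * a1) u) (smul (c * b1) v)"
      by (simp add: span_eq fun_eq_iff algebra_simps)
    then show "smul c x \<in> W" using W by blast
  qed
qed

lemma Bf_smul2: "Bf x (smul c y) = c * Bf x y"
  by (simp add: Bf_expand algebra_simps)
lemma Bf_add2: "Bf x (y + z) = Bf x y + Bf x z"
  by (simp add: Bf_expand algebra_simps)

lemma hyp_pair:
  assumes "plus_type_2space W"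
  shows "\<exists>e f. e \<in> W \<and> f \<in> W \<and> Qf e = 0 \<and> Qf f = 0 \<and> Bf e f = 1"
proof -
  have ts: "two_space W" and nd: "nondegenerate W" using assms unfolding plus_type_2space_def by blast+
  obtain v where v: "v \<in> W" "v \<noteq> vzero" "Qf v = 0" using assms unfolding plus_type_2space_def by blast
  obtain y where y: "y \<in> W" "Bf v y \<noteq> 0" using nd v(1,2) unfolding nondegenerate_def by blast
  define y' where "y' = smul (inverse (Bf v y)) y"
  have y'W: "y' \<in> W" unfolding y'_def by (rule two_space_closed(2)[OF ts y(1)])
  have By': "Bf v y' = 1" unfolding y'_def Bf_smul2 using y(2) by simp
  define f where "f = y' + smul (- Qf y') v"
  have fW: "f \<in> W" unfolding f_def by (rule two_space_closed(1)[OF ts y'W two_space_closed(2)[OF ts v(1)]])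
  have "Qf f = Qf y' + Qf (smul (- Qf y') v) + Bf y' (smul (- Qf y') v)"
    unfolding f_def by (rule Qf_add)
  also have "\<dots> = Qf y' + (- Qf y') * Bf v y'"
    unfolding Qf_smul Bf_smul2 v(3) Bf_sym[of y' v] by simp
  also have "\<dots> = 0" unfolding By' by simp
  finally have Qf0: "Qf f = 0" .
  have "Bf v f = Bf v y' + (- Qf y') * Bf v v"
    unfolding f_def Bf_add2 Bf_smul2 ..
  also have "\<dots> = 1" unfolding By' Bf_self v(3) by simp
  finally have "Bf v f = 1" .
  then show ?thesis using v fW Qf0 by blast
qed

lemma fa_props:
  assumes "field_aut s"
  shows "s 0 = 0" "s 1 = 1" "s (- x) = - s x" "s (x ^ n) = s x ^ n" "(s c = 0) = (c = 0)"
proof -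
  have add: "\<And>a b. s (a + b) = s a + s b" and mul: "\<And>a b. s (a * b) = s a * s b" and b: "bij s"
    using assms by (auto simp: field_aut_def)
  have "s 0 + 0 = s 0 + s 0" using add[of 0 0] by simp
  then show s0: "s 0 = 0" using add_left_cancel by metis
  have inj: "inj s" using b bij_is_inj by blast
  show sz: "(s c = 0) = (c = 0)" using s0 inj by (metis injD)
  have "s (1 * 1) = s 1 * s 1" by (rule mul)
  then have "s 1 * (s 1 - 1) = 0" by (simp add: algebra_simps)
  moreover have "s 1 \<noteq> 0" using s0 inj by (metis injD one_neq_zero)
  ultimately show s1: "s 1 = 1" by simp
  have "s (x + - x) = s x + s (- x)" by (rule add)
  then show "s (- x) = - s x" using s0 by (simp add: eq_neg_iff_add_eq_0 add.commute)
  show "s (x ^ n) = s x ^ n" by (induction n) (simp_all add: s1 mul)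
qed


definition EE :: "nat \<Rightarrow> 10" where "EE i = of_nat (2 * i)"
definition FF :: "nat \<Rightarrow> 10" where "FF i = of_nat (2 * i + 1)"

lemma lt5: "i < (5::nat) \<Longrightarrow> i = 0 \<or> i = 1 \<or> i = 2 \<or> i = 3 \<or> i = 4" by auto

lemma EF_cases: "\<exists>i<5. k = EE i \<or> k = FF i"
proof -
  have "k = EE 0 \<or> k = FF 0 \<or> k = EE 1 \<or> k = FF 1 \<or> k = EE 2 \<or> k = FF 2 \<or> k = EE 3 \<or> k = FF 3 \<or> k = EE 4 \<or> k = FF 4"
    using x10[of k] by (simp add: EE_def FF_def)
  moreover have l: "(0::nat) < 5" "(1::nat) < 5" "(2::nat) < 5" "(3::nat) < 5" "(4::nat) < 5" by simp_all
  ultimately show ?thesis by blast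
qed

lemma EE_eq: assumes "i < 5" "j < 5" shows "(EE i = EE j) = (i = j)"
  using lt5[OF assms(1)] lt5[OF assms(2)] by (elim disjE) (simp_all add: EE_def)
lemma FF_eq: assumes "i < 5" "j < 5" shows "(FF i = FF j) = (i = j)"
  using lt5[OF assms(1)] lt5[OF assms(2)] by (elim disjE) (simp_all add: FF_def)
lemma EF_neq: assumes "i < 5" "j < 5" shows "EE i \<noteq> FF j"
  using lt5[OF assms(1)] lt5[OF assms(2)] by (elim disjE) (simp_all add: EE_def FF_def)

lemma iso_inv:
  assumes "isometry g" shows "isometry (finv g)"
proof -
  have b: "bij g" and a: "\<And>x y. g (vadd x y) = vadd (g x) (g y)" and sm: "\<And>c x. g (smul c x) = smul c (g x)"
    and q: "\<And>x. Qf (g x) = Qf x" using assms by (auto simp: isometry_def)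
  have gi: "\<And>x. g (finv g x) = x" using b by (simp add: bij_is_surj surj_f_inv_f)
  have ig: "\<And>x. finv g (g x) = x" using b by (simp add: bij_is_inj)
  show ?thesis unfolding isometry_def
  proof (intro conjI allI)
    show "bij (finv g)" using b by (simp add: bij_imp_bij_inv)
    fix x y c
    show "finv g (vadd x y) = vadd (finv g x) (finv g y)"
      by (metis a gi ig)
    show "finv g (smul c x) = smul c (finv g x)" by (metis sm gi ig)
    show "Qf (finv g x) = Qf x" by (metis q gi)
  qed
qed

lemma iso_comp:
  assumes "isometry g" "isometry h" shows "isometry (g \<circ> h)"
  using assms by (auto simp: isometry_def bij_comp)

lemma Qsum:
  assumes "finite A" and "\<And>i j. i \<in> A \<Longrightarrow> j \<in> A \<Longrightarrow> i \<noteq> j \<Longrightarrow> Bf (w i) (w j) = 0"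
  shows "Qf (\<Sum>i\<in>A. w i) = (\<Sum>i\<in>A. Qf (w i))"
  using assms
proof (induction A rule: finite_induct)
  case empty
  then show ?case by (simp add: Qf_expand)
next
  case (insert x F)
  have "Qf (\<Sum>i\<in>insert x F. w i) = Qf (w x + (\<Sum>i\<in>F. w i))" by (simp only: sum.insert[OF insert(1,2)])
  also have "\<dots> = Qf (w x) + Qf (\<Sum>i\<in>F. w i) + Bf (w x) (\<Sum>i\<in>F. w i)" by (rule Qf_add)
  also have "Bf (w x) (\<Sum>i\<in>F. w i) = (\<Sum>i\<in>F. Bf (w i) (w x))"
    by (simp add: Bf_sym[of "w x"] Bf_sum1)
  also have "\<dots> = 0" using insert(2,4) by (intro sum.neutral) force
  also have "Qf (\<Sum>i\<in>F. w i) = (\<Sum>i\<in>F. Qf (w i))" using insert by blast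
  finally show ?case using insert(1,2) by simp
qed


lemma FE_neq: assumes "i < 5" "j < 5" shows "FF j \<noteq> EE i"
  using EF_neq[OF assms] by metis

locale hb =
  fixes D :: "'k::{field,finite} vect set set" and \<nu> :: "nat \<Rightarrow> 'k vect set" and e f :: "nat \<Rightarrow> 'k vect"
  assumes bij: "bij_betw \<nu> {..<5} D"
   and orth: "\<And>W W' x y. W \<in> D \<Longrightarrow> W' \<in> D \<Longrightarrow> W \<noteq> W' \<Longrightarrow> x \<in> W \<Longrightarrow> y \<in> W' \<Longrightarrow> Bf x y = 0"
   and ts: "\<And>W. W \<in> D \<Longrightarrow> two_space W"
   and ef: "\<And>i. i < 5 \<Longrightarrow> e i \<in> \<nu> i \<and> f i \<in> \<nu> i \<and> Qf (e i) = 0 \<and> Qf (f i) = 0 \<and> Bf (e i) (f i) = 1"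
begin

lemma \<nu>D: "i < 5 \<Longrightarrow> \<nu> i \<in> D" using bij_betwE[OF bij] by simp
lemma \<nu>inj: assumes "i < 5" "j < 5" "i \<noteq> j" shows "\<nu> i \<noteq> \<nu> j"
  using bij_betw_imp_inj_on[OF bij] assms unfolding inj_on_def by (metis lessThan_iff)
lemma \<nu>surj: "W \<in> D \<Longrightarrow> \<exists>j<5. W = \<nu> j"
  using bij_betw_imp_surj_on[OF bij] by (metis image_iff lessThan_iff)
lemma orth': assumes "i < 5" "j < 5" "i \<noteq> j" "x \<in> \<nu> i" "y \<in> \<nu> j" shows "Bf x y = 0"
  by (rule orth[OF \<nu>D[OF assms(1)] \<nu>D[OF assms(2)] \<nu>inj[OF assms(1-3)] assms(4,5)])

lemma Bee: "i < 5 \<Longrightarrow> j < 5 \<Longrightarrow> Bf (e i) (e j) = 0"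
  using ef[of i] ef[of j] orth'[of i j "e i" "e j"] by (cases "i = j") (auto simp: Bf_self)
lemma Bff: "i < 5 \<Longrightarrow> j < 5 \<Longrightarrow> Bf (f i) (f j) = 0"
  using ef[of i] ef[of j] orth'[of i j "f i" "f j"] by (cases "i = j") (auto simp: Bf_self)
lemma Bef: "i < 5 \<Longrightarrow> j < 5 \<Longrightarrow> Bf (e i) (f j) = (if i = j then 1 else 0)"
  using ef[of i] ef[of j] orth'[of i j "e i" "f j"] by auto
lemma Bfe: "i < 5 \<Longrightarrow> j < 5 \<Longrightarrow> Bf (f i) (e j) = (if i = j then 1 else 0)"
  using Bef[of j i] by (simp add: Bf_sym eq_commute)

definition phi :: "'k vect \<Rightarrow> 'k vect" where
  "phi x = (\<Sum>i<5. smul (x (EE i)) (e i) + smul (x (FF i)) (f i))"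

lemma phi_apply: "phi x p = (\<Sum>i<5. x (EE i) * e i p + x (FF i) * f i p)"
  unfolding phi_def by (simp add: sum_app)

lemma phi_add: "phi (x + y) = phi x + phi y"
proof (rule ext)
  fix p
  have "phi (x + y) p = (\<Sum>i<5. (x (EE i) * e i p + x (FF i) * f i p) + (y (EE i) * e i p + y (FF i) * f i p))"
    unfolding phi_apply by (rule sum.cong) (simp_all add: algebra_simps)
  then show "phi (x + y) p = (phi x + phi y) p" by (simp add: phi_apply sum.distrib)
qed

lemma phi_smul: "phi (smul c x) = smul c (phi x)"
  by (simp add: fun_eq_iff phi_apply sum_distrib_left algebra_simps)

lemma Bphi: assumes "j < 5" shows "Bf (phi x) (f j) = x (EE j)" "Bf (phi x) (e j) = x (FF j)"
proof -
  have "Bf (phi x) (f j) = (\<Sum>i<5. x (EE i) * Bf (e i) (f j) + x (FF i) * Bf (f i) (f j))"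
    unfolding phi_def by (simp add: Bf_sum1 Bf_add1 Bf_smul1)
  also have "\<dots> = (\<Sum>i<5. if i = j then x (EE i) else 0)"
    by (rule sum.cong) (use assms in \<open>auto simp: Bef Bff\<close>)
  also have "\<dots> = x (EE j)" using assms by simp
  finally show "Bf (phi x) (f j) = x (EE j)" .
  have "Bf (phi x) (e j) = (\<Sum>i<5. x (EE i) * Bf (e i) (e j) + x (FF i) * Bf (f i) (e j))"
    unfolding phi_def by (simp add: Bf_sum1 Bf_add1 Bf_smul1)
  also have "\<dots> = (\<Sum>i<5. if i = j then x (FF i) else 0)"
    by (rule sum.cong) (use assms in \<open>auto simp: Bfe Bee\<close>)
  also have "\<dots> = x (FF j)" using assms by simp
  finally show "Bf (phi x) (e j) = x (FF j)" .
qed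

lemma phi_inj: "inj phi"
proof (rule injI)
  fix x y assume eq: "phi x = phi y"
  show "x = y"
  proof
    fix k
    obtain j where j: "j < 5" "k = EE j \<or> k = FF j" using EF_cases by blast
    then show "x k = y k" using Bphi[OF j(1), of x] Bphi[OF j(1), of y] eq by auto
  qed
qed

lemma phi_bij: "bij phi"
  using phi_inj finite_UNIV_inj_surj[OF _ phi_inj] by (simp add: bij_def)

lemma phi_Q: "Qf (phi x) = Qf x"
proof -
  define w where "w i = smul (x (EE i)) (e i) + smul (x (FF i)) (f i)" for i
  have wn: "i < 5 \<Longrightarrow> w i \<in> \<nu> i" for i
    using ef[of i] ts[OF \<nu>D[of i]] two_space_closed unfolding w_def by blast
  have "Qf (phi x) = (\<Sum>i<5. Qf (w i))"
    unfolding phi_def w_def[symmetric]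
    by (rule Qsum) (use wn orth' in auto)
  also have "\<dots> = (\<Sum>i<5. x (EE i) * x (FF i))"
  proof (rule sum.cong)
    fix i assume "i \<in> {..<5::nat}"
    then have i: "i < 5" by simp
    have "Qf (w i) = Qf (smul (x (EE i)) (e i)) + Qf (smul (x (FF i)) (f i)) + Bf (smul (x (EE i)) (e i)) (smul (x (FF i)) (f i))"
      unfolding w_def by (rule Qf_add)
    also have "\<dots> = x (EE i) * x (FF i)"
      using ef[OF i] by (simp add: Qf_smul Bf_smul1 Bf_smul2)
    finally show "Qf (w i) = x (EE i) * x (FF i)" .
  qed simp
  also have "\<dots> = Qf x" by (simp add: Qf_def EE_def FF_def)
  finally show ?thesis .
qed

lemma phi_iso: "isometry phi"
  unfolding isometry_def using phi_bij phi_add phi_smul phi_Q by (simp add: vadd_eq)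

lemma phi_inv_phi: "phi (finv phi x) = x"
  using phi_bij by (simp add: bij_is_surj surj_f_inv_f)
lemma inv_phi_phi: "finv phi (phi x) = x"
  using phi_bij by (simp add: bij_is_inj)

lemma suppW:
  assumes j: "j < 5" and w: "w \<in> \<nu> j" and i: "i < 5" "i \<noteq> j"
  shows "finv phi w (EE i) = 0" "finv phi w (FF i) = 0"
proof -
  have "finv phi w (EE i) = Bf (phi (finv phi w)) (f i)" using Bphi[OF i(1)] by simp
  also have "\<dots> = 0" unfolding phi_inv_phi using orth'[OF j i(1) _ w] ef[OF i(1)] i(2) by auto
  finally show "finv phi w (EE i) = 0" .
  have "finv phi w (FF i) = Bf (phi (finv phi w)) (e i)" using Bphi[OF i(1)] by simp
  also have "\<dots> = 0" unfolding phi_inv_phi using orth'[OF j i(1) _ w] ef[OF i(1)] i(2) by auto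
  finally show "finv phi w (FF i) = 0" .
qed

lemma phi_dl: assumes "i < 5" shows "phi (dl (EE i)) = e i" "phi (dl (FF i)) = f i"
proof -
  show "phi (dl (EE i)) = e i"
  proof
    fix p
    have "phi (dl (EE i)) p = (\<Sum>i'<5. if i' = i then e i' p else 0)"
      unfolding phi_apply by (rule sum.cong) (use assms in \<open>auto simp: dl_def EE_eq FE_neq\<close>)
    then show "phi (dl (EE i)) p = e i p" using assms by simp
  qed
  show "phi (dl (FF i)) = f i"
  proof
    fix p
    have "phi (dl (FF i)) p = (\<Sum>i'<5. if i' = i then f i' p else 0)"
      unfolding phi_apply by (rule sum.cong) (use assms in \<open>auto simp: dl_def FF_eq EF_neq\<close>)
    then show "phi (dl (FF i)) p = f i p" using assms by simp
  qed
qed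

end


lemma dl_nz: "dl q \<noteq> (0::'k::field vect)"
proof
  assume "dl q = (0::'k vect)"
  then have "dl q q = (0::'k vect) q" by simp
  then show False by (simp add: dl_def)
qed

context hb begin

lemma Qf_EF: "Qf y = (\<Sum>i<5. y (EE i) * y (FF i))"
  by (simp add: Qf_def EE_def FF_def)

lemma vec_eq_EF:
  assumes "\<And>i. i < 5 \<Longrightarrow> y (EE i) = z (EE i) \<and> y (FF i) = z (FF i)"
  shows "y = z"
proof
  fix p
  obtain i where "i < 5" "p = EE i \<or> p = FF i" using EF_cases by blast
  then show "y p = z p" using assms by auto
qed

lemma mono:
  assumes ss: "semisim k" and st: "\<forall>W\<in>D. k ` W \<in> D"
  shows "\<exists>\<sigma> a \<tau>. field_aut \<sigma> \<and> slin (finv phi \<circ> k \<circ> phi) \<sigma> \<and> inj \<tau> \<and> (\<forall>q. a q \<noteq> 0) \<and>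
     (\<forall>q. (finv phi \<circ> k \<circ> phi) (dl q) = smul (a q) (dl (\<tau> q)))"
proof -
  obtain s lam where s: "field_aut s" and lam: "lam \<noteq> 0" and kb: "bij k"
    and kadd: "\<And>x y. k (vadd x y) = vadd (k x) (k y)"
    and ksm: "\<And>c x. k (smul c x) = smul (s c) (k x)"
    and kq: "\<And>x. Qf (k x) = lam * s (Qf x)"
    using ss unfolding semisim_def by blast
  have ipi: "isometry (finv phi)" by (rule iso_inv[OF phi_iso])
  have ipadd: "\<And>x y. finv phi (x + y) = finv phi x + finv phi y"
    using ipi unfolding isometry_def vadd_eq by blast
  have ipsm: "\<And>c x. finv phi (smul c x) = smul c (finv phi x)"
    using ipi unfolding isometry_def by blast
  have ipq: "\<And>x. Qf (finv phi x) = Qf x"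
    using ipi unfolding isometry_def by blast
  define kt where "kt = finv phi \<circ> k \<circ> phi"
  have ktadd: "kt (x + y) = kt x + kt y" for x y
    unfolding kt_def by (simp add: phi_add kadd[unfolded vadd_eq] ipadd)
  have ktsm: "kt (smul c x) = smul (s c) (kt x)" for c x
    unfolding kt_def by (simp add: phi_smul ksm ipsm)
  have ktsl: "slin kt s" unfolding slin_def addi_def using ktadd ktsm by blast
  have ktq: "Qf (kt x) = lam * s (Qf x)" for x
    unfolding kt_def by (simp add: ipq kq phi_Q)
  have ktinj: "inj kt"
    unfolding kt_def using phi_bij kb bij_imp_bij_inv[OF phi_bij]
    by (simp add: bij_is_inj inj_compose)
  have kt0: "kt 0 = 0" using ktsl unfolding slin_def by (blast intro: addi_zero)
  have sp: "field_aut s" by (rule s)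
  have col: "\<exists>c p. c \<noteq> 0 \<and> kt (dl q) = smul c (dl p)" for q
  proof -
    obtain i where i: "i < 5" "q = EE i \<or> q = FF i" using EF_cases by blast
    have vn: "phi (dl q) \<in> \<nu> i" using i phi_dl[OF i(1)] ef[OF i(1)] by auto
    have qv: "Qf (phi (dl q)) = 0" using i phi_dl[OF i(1)] ef[OF i(1)] by auto
    obtain j where j: "j < 5" "k ` \<nu> i = \<nu> j" using \<nu>surj st \<nu>D[OF i(1)] by blast
    have kv: "k (phi (dl q)) \<in> \<nu> j" using vn j(2) by blast
    define y where "y = kt (dl q)"
    have y_eq: "y = finv phi (k (phi (dl q)))" by (simp add: y_def kt_def)
    have yz: "\<And>i'. i' < 5 \<Longrightarrow> i' \<noteq> j \<Longrightarrow> y (EE i') = 0 \<and> y (FF i') = 0"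
      using suppW[OF j(1) kv] y_eq by blast
    have "Qf y = lam * s (Qf (dl q))" by (simp add: y_def ktq)
    also have "Qf (dl q :: 'k vect) = 0" using qv phi_Q by simp
    finally have "Qf y = 0" using fa_props(1)[OF sp] by simp
    moreover have "Qf y = (\<Sum>i'<5. if i' = j then y (EE i') * y (FF i') else 0)"
      unfolding Qf_EF by (rule sum.cong) (use yz in auto)
    ultimately have prod0: "y (EE j) * y (FF j) = 0" using j(1) by simp
    have ynz: "y \<noteq> 0" unfolding y_def using ktinj kt0 dl_nz by (metis injD)
    show ?thesis
    proof (cases "y (EE j) = 0")
      case True
      have yeq: "y = smul (y (FF j)) (dl (FF j))"
        by (rule vec_eq_EF) (use yz True j(1) in \<open>auto simp: dl_def FF_eq FE_neq EF_neq\<close>)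
      then have "y (FF j) \<noteq> 0" using ynz by (auto simp: smul_def)
      then show ?thesis using yeq y_def by blast
    next
      case False
      then have F0: "y (FF j) = 0" using prod0 by simp
      have yeq: "y = smul (y (EE j)) (dl (EE j))"
        by (rule vec_eq_EF) (use yz F0 j(1) in \<open>auto simp: dl_def EE_eq EF_neq FE_neq\<close>)
      then show ?thesis using False y_def by blast
    qed
  qed
  have "\<forall>q. \<exists>cp. fst cp \<noteq> 0 \<and> kt (dl q) = smul (fst cp) (dl (snd cp))"
    using col by fastforce
  then obtain F where F: "\<And>q. fst (F q) \<noteq> 0 \<and> kt (dl q) = smul (fst (F q)) (dl (snd (F q)))"
    by metis
  define a where "a q = fst (F q)" for q
  define \<tau> where "\<tau> q = snd (F q)" for q
  have aF: "\<And>q. a q \<noteq> 0" and kF: "\<And>q. kt (dl q) = smul (a q) (dl (\<tau> q))"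
    using F by (auto simp: a_def \<tau>_def)
  have sb: "bij s" using s unfolding field_aut_def by blast
  have injt: "inj \<tau>"
  proof (rule injI)
    fix q q' assume eq: "\<tau> q = \<tau> q'"
    define \<mu> where "\<mu> = finv s (a q / a q')"
    have sm: "s \<mu> = a q / a q'" unfolding \<mu>_def using sb by (simp add: bij_is_surj surj_f_inv_f)
    have "kt (smul \<mu> (dl q')) = smul (s \<mu>) (smul (a q') (dl (\<tau> q')))" by (simp add: ktsm kF)
    also have "\<dots> = smul (a q) (dl (\<tau> q))" using aF[of q'] by (simp add: sm smul_smul eq)
    also have "\<dots> = kt (dl q)" by (simp add: kF)
    finally have "smul \<mu> (dl q') = dl q" using ktinj by (simp add: inj_eq)
    then have "\<mu> * dl q' q = 1" by (metis smul_apply dl_def)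
    then show "q = q'" by (auto simp: dl_def split: if_splits)
  qed
  show ?thesis using s ktsl injt aF kF unfolding kt_def by blast
qed

end

lemma the_inv_fun:
  assumes "P y0" "u \<circ> y0 = id" "y0 \<circ> u = id"
  shows "(THE y. P y \<and> u \<circ> y = id \<and> y \<circ> u = id) = y0"
proof (rule the_equality)
  show "P y0 \<and> u \<circ> y0 = id \<and> y0 \<circ> u = id" using assms by blast
next
  fix y assume "P y \<and> u \<circ> y = id \<and> y \<circ> u = id"
  then have "y = y \<circ> (u \<circ> y0)" "y \<circ> u = id" using assms by auto
  then show "y = y0" by (simp add: comp_assoc[symmetric])
qed

lemma bij_finv1: "bij u \<Longrightarrow> u \<circ> finv u = id"
  by (metis bij_is_surj surj_iff)
lemma bij_finv2: "bij u \<Longrightarrow> finv u \<circ> u = id"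
  by (metis bij_is_inj inj_iff)

lemma orth_inv: assumes "isometry u" shows "inv\<^bsub>OrthGrp\<^esub> u = finv u"
proof -
  have b: "bij u" using assms by (simp add: isometry_def)
  show ?thesis unfolding m_inv_def OrthGrp_def
    by (simp, rule the_inv_fun) (simp_all add: iso_inv[OF assms] bij_finv1[OF b] bij_finv2[OF b])
qed

lemma gh_inverse:
  assumes sg: "subgroup Gh (GammaO :: ('k::{field,finite} vect \<Rightarrow> 'k vect) monoid)" and g: "g \<in> Gh"
  shows "finv g \<in> Gh" "inv\<^bsub>GammaO\<lparr>carrier := Gh\<rparr>\<^esub> g = finv g" "bij g"
proof -
  have mc: "\<And>x y. x \<in> Gh \<Longrightarrow> y \<in> Gh \<Longrightarrow> x \<circ> y \<in> Gh"
    using subgroup.m_closed[OF sg] by (simp add: GammaO_def)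
  have one: "id \<in> Gh" using subgroup.one_closed[OF sg] by (simp add: GammaO_def)
  have sub: "Gh \<subseteq> {g. semisim g}" using subgroup.subset[OF sg] by (simp add: GammaO_def)
  show bg: "bij g" using sub g by (auto simp: semisim_def)
  have pw: "g ^^ n \<in> Gh" for n
  proof (induction n)
    case 0 show ?case using one by (simp only: funpow_0 id_def[symmetric])
  next
    case (Suc n) show ?case by (simp only: funpow.simps(2)) (rule mc[OF g Suc])
  qed
  have "\<not> inj (\<lambda>n::nat. g ^^ n)"
  proof
    assume inj: "inj (\<lambda>n::nat. g ^^ n)"
    have "range (\<lambda>n::nat. g ^^ n) \<subseteq> Gh" by (rule image_subsetI) (rule pw)
    then have "finite (range (\<lambda>n::nat. g ^^ n))" by (rule finite_subset) (rule finite)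
    then have "finite (UNIV::nat set)" using finite_image_iff[OF inj] by simp
    then show False by simp
  qed
  then obtain x y :: nat where xy: "x \<noteq> y" "g ^^ x = g ^^ y"
    unfolding inj_def by blast
  obtain m n :: nat where mn: "m < n" "g ^^ m = g ^^ n"
  proof (cases "x < y")
    case True then show ?thesis using that xy by blast
  next
    case False then have "y < x" using xy(1) by simp
    then show ?thesis using that xy by metis
  qed
  have bm: "bij (g ^^ k)" for k
  proof (induction k)
    case 0 show ?case by (simp only: funpow.simps(1) bij_id)
  next
    case (Suc k) show ?case by (simp only: funpow.simps(2)) (rule bij_comp[OF Suc bg])
  qed
  have sm: "surj (g ^^ m)" using bm[of m] by (simp add: bij_is_surj)
  have nm: "n = (n - m) + m" using mn(1) by simp
  have eqn: "g ^^ n = g ^^ (n - m) \<circ> g ^^ m" by (subst nm) (rule funpow_add)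
  have d: "g ^^ (n - m) = id"
  proof
    fix z
    obtain w where w: "z = (g ^^ m) w" using sm by (metis surjD)
    have "(g ^^ (n - m)) ((g ^^ m) w) = (g ^^ n) w" using eqn by (simp add: fun_eq_iff)
    also have "\<dots> = (g ^^ m) w" using mn(2) by simp
    finally show "(g ^^ (n - m)) z = id z" using w by simp
  qed
  define d' where "d' = n - m - 1"
  have d': "n - m = Suc d'" using mn(1) by (simp add: d'_def)
  have y1: "g \<circ> g ^^ d' = id"
  proof -
    have "g \<circ> g ^^ d' = g ^^ (Suc d')" by (rule funpow.simps(2)[symmetric])
    then show ?thesis using d d' by simp
  qed
  have y2: "g ^^ d' \<circ> g = id"
  proof -
    have "g ^^ d' \<circ> g = g ^^ (Suc d')" by (rule funpow_Suc_right[symmetric])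
    then show ?thesis using d d' by simp
  qed
  have fi: "finv g = g ^^ d'" using inv_unique_comp[OF y1 y2] .
  show "finv g \<in> Gh" using fi pw by simp
  show "inv\<^bsub>GammaO\<lparr>carrier := Gh\<rparr>\<^esub> g = finv g"
    unfolding m_inv_def
    by (simp add: GammaO_def, rule the_inv_fun[of _ "finv g"])
      (simp_all only: fi pw y1 y2)
qed

lemma conjg_char:
  assumes sg: "subgroup Gh (GammaO :: ('k::{field,finite} vect \<Rightarrow> 'k vect) monoid)" and g: "g \<in> Gh"
  shows "conjg (GammaO\<lparr>carrier := Gh\<rparr>) H g = {finv g \<circ> h \<circ> g | h. h \<in> H}"
  unfolding conjg_def gh_inverse(2)[OF sg g] by (simp add: GammaO_def)


lemma rt_iso:
  assumes d: "distinct [a,a',b,b']" and q: "\<And>x. Qf (rt a a' b b' s x) = Qf x"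
  shows "isometry (rt a a' b b' s)"
proof -
  have "rt a a' b b' s \<circ> rt a a' b b' (-s) = id" "rt a a' b b' (-s) \<circ> rt a a' b b' s = id"
    by (simp_all add: rt_comp[OF d] rt_zero)
  then have "bij (rt a a' b b' s)" by (metis o_bij)
  then show ?thesis unfolding isometry_def by (simp add: vadd_eq rt_add rt_smul q)
qed

lemma tor_iso:
  assumes d: "a \<noteq> a'" and c: "c \<noteq> 0" and q: "\<And>x. Qf (tor a a' c x) = Qf x"
  shows "isometry (tor a a' c)"
proof -
  have "tor a a' c \<circ> tor a a' (inverse c) = id" "tor a a' (inverse c) \<circ> tor a a' c = id"
    using c by (simp_all add: tor_comp[OF d] tor_one)
  then have "bij (tor a a' c)" by (metis o_bij)
  then show ?thesis unfolding isometry_def by (simp add: vadd_eq tor_add tor_smul q)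
qed

lemma finv_rt: assumes d: "distinct [a,a',b,b']" shows "finv (rt a a' b b' u) = rt a a' b b' (-u)"
  by (rule inv_unique_comp) (simp_all add: rt_comp[OF d] rt_zero)

lemma finv_tor: assumes d: "a \<noteq> a'" and c: "c \<noteq> 0" shows "finv (tor a a' c) = tor a a' (inverse c)"
  by (rule inv_unique_comp) (use c in \<open>simp_all add: tor_comp[OF d] tor_one\<close>)

lemma iso_bij: "isometry u \<Longrightarrow> bij u" by (simp add: isometry_def)

lemma fi_app: "bij u \<Longrightarrow> u (finv u x) = x" "bij u \<Longrightarrow> finv u (u x) = x"
  by (simp_all add: bij_is_surj surj_f_inv_f bij_is_inj)

lemma comm_in_omega:
  assumes p: "isometry \<phi>" and d: "isometry d" and r: "isometry r"
  shows "\<phi> \<circ> (d \<circ> r \<circ> finv d \<circ> finv r) \<circ> finv \<phi> \<in> Omega"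
proof -
  define h1 where "h1 = \<phi> \<circ> d \<circ> finv \<phi>"
  define h2 where "h2 = \<phi> \<circ> r \<circ> finv \<phi>"
  have bp: "bij \<phi>" "bij d" "bij r" using p d r by (simp_all add: iso_bij)
  have ih1: "isometry h1" unfolding h1_def by (intro iso_comp p d iso_inv)
  have ih2: "isometry h2" unfolding h2_def by (intro iso_comp p r iso_inv)
  have f1: "finv h1 = \<phi> \<circ> finv d \<circ> finv \<phi>"
    unfolding h1_def by (rule inv_unique_comp) (simp_all add: fun_eq_iff fi_app bp)
  have f2: "finv h2 = \<phi> \<circ> finv r \<circ> finv \<phi>"
    unfolding h2_def by (rule inv_unique_comp) (simp_all add: fun_eq_iff fi_app bp)
  have eq: "\<phi> \<circ> (d \<circ> r \<circ> finv d \<circ> finv r) \<circ> finv \<phi> = h1 \<otimes>\<^bsub>OrthGrp\<^esub> h2 \<otimes>\<^bsub>OrthGrp\<^esub> inv\<^bsub>OrthGrp\<^esub> h1 \<otimes>\<^bsub>OrthGrp\<^esub> inv\<^bsub>OrthGrp\<^esub> h2"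
    unfolding orth_inv[OF ih1] orth_inv[OF ih2] f1 f2
    by (simp add: OrthGrp_def h1_def h2_def fun_eq_iff fi_app bp)
  have "h1 \<in> carrier OrthGrp" "h2 \<in> carrier OrthGrp" using ih1 ih2 by (simp_all add: OrthGrp_def)
  then have "h1 \<otimes>\<^bsub>OrthGrp\<^esub> h2 \<otimes>\<^bsub>OrthGrp\<^esub> inv\<^bsub>OrthGrp\<^esub> h1 \<otimes>\<^bsub>OrthGrp\<^esub> inv\<^bsub>OrthGrp\<^esub> h2
      \<in> derived_set OrthGrp (carrier OrthGrp)" by blast
  then show ?thesis unfolding eq Omega_def derived_def by (rule generate.incl)
qed

lemma root_omega:
  fixes c0 :: "'k::field" and \<phi> :: "'k vect \<Rightarrow> 'k vect"
  assumes d: "distinct [a,a',b,b']" and q: "\<And>(s::'k) x. Qf (rt a a' b b' s x) = Qf x"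
    and qt: "\<And>(c::'k) x. c \<noteq> 0 \<Longrightarrow> Qf (tor a a' c x) = Qf x"
    and c0: "c0 \<noteq> 0" "c0 \<noteq> 1" and p: "isometry \<phi>"
  shows "\<phi> \<circ> rt a a' b b' s \<circ> finv \<phi> \<in> Omega"
proof -
  define u where "u = s / (c0 - 1)"
  have aa: "a \<noteq> a'" using d by simp
  have "rt a a' b b' s = tor a a' c0 \<circ> rt a a' b b' u \<circ> finv (tor a a' c0) \<circ> finv (rt a a' b b' u)"
    unfolding finv_rt[OF d] finv_tor[OF aa c0(1)] u_def by (rule rt_commutator[OF d c0])
  moreover have "\<phi> \<circ> (tor a a' c0 \<circ> rt a a' b b' u \<circ> finv (tor a a' c0) \<circ> finv (rt a a' b b' u)) \<circ> finv \<phi> \<in> Omega"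
    by (rule comm_in_omega[OF p tor_iso[OF aa c0(1) qt[OF c0(1)]] rt_iso[OF d q]])
  ultimately show ?thesis by simp
qed

lemma omega_comp:
  assumes p: "isometry \<phi>" and A: "\<phi> \<circ> A \<circ> finv \<phi> \<in> Omega" and B: "\<phi> \<circ> B \<circ> finv \<phi> \<in> Omega"
  shows "\<phi> \<circ> (A \<circ> B) \<circ> finv \<phi> \<in> Omega"
proof -
  have bp: "bij \<phi>" using p by (simp add: iso_bij)
  have "(\<phi> \<circ> A \<circ> finv \<phi>) \<otimes>\<^bsub>OrthGrp\<^esub> (\<phi> \<circ> B \<circ> finv \<phi>) \<in> Omega"
    using A B unfolding Omega_def derived_def by (rule generate.eng)
  moreover have "(\<phi> \<circ> A \<circ> finv \<phi>) \<otimes>\<^bsub>OrthGrp\<^esub> (\<phi> \<circ> B \<circ> finv \<phi>) = \<phi> \<circ> (A \<circ> B) \<circ> finv \<phi>"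
    by (simp add: OrthGrp_def fun_eq_iff fi_app bp)
  ultimately show ?thesis by simp
qed

lemma Q_r1': "\<And>s x. Qf (rt 0 1 6 7 s x) = Qf x" by (rule Q_r1)
lemma dist_all: "distinct [0,1,6,7::10]" "distinct [0,1,7,6::10]" "distinct [0,1,2,3::10]"
  "distinct [3,2,8,9::10]" "distinct [6,7,3,2::10]" "distinct [2,3,5,4::10]" by simp_all

lemma g1_omega:
  assumes c0: "c0 \<noteq> 0" "c0 \<noteq> (1::'k::field)" and p: "isometry \<phi>"
  shows "\<phi> \<circ> N1 (t::'k) \<circ> finv \<phi> \<in> Omega"
  unfolding N1_def
  by (intro omega_comp[OF p] root_omega[OF _ _ _ c0 p] dist_all Q_r1 Q_r2 Q_r3 Q_r4 Q_t1 Q_t2 Q_t3 Q_t4; assumption)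

lemma g2_omega:
  assumes c0: "c0 \<noteq> 0" "c0 \<noteq> (1::'k::field)" and p: "isometry (\<phi> :: 'k vect \<Rightarrow> 'k vect)"
  shows "\<phi> \<circ> N2 \<circ> finv \<phi> \<in> Omega"
  unfolding N2_def
  by (intro omega_comp[OF p] root_omega[OF _ _ _ c0 p] dist_all Q_r5 Q_r6 Q_t3 Q_t4; assumption)


lemma supp_smul: "c \<noteq> 0 \<Longrightarrow> supp (smul c v) = supp v"
  by (simp add: supp_def)

lemma smul_image:
  assumes "two_space W" "d \<noteq> 0"
  shows "smul d ` W = W"
proof
  show "smul d ` W \<subseteq> W" using two_space_closed(2)[OF assms(1)] by blast
  show "W \<subseteq> smul d ` W"
  proof
    fix w assume "w \<in> W"
    then have "smul (inverse d) w \<in> W" using two_space_closed(2)[OF assms(1)] by blast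
    moreover have "w = smul d (smul (inverse d) w)" using assms(2) by (simp add: smul_def fun_eq_iff)
    ultimately show "w \<in> smul d ` W" by blast
  qed
qed

lemma exists_c0:
  assumes "CARD('k::{field,finite}) \<ge> 8"
  shows "\<exists>c0::'k. c0 \<noteq> 0 \<and> c0 \<noteq> 1"
proof (rule ccontr)
  assume "\<not> ?thesis"
  then have "(UNIV::'k set) \<subseteq> {0, 1}" by auto
  then have "CARD('k) \<le> card {0::'k, 1}" by (rule card_mono[rotated]) simp
  also have "\<dots> \<le> 2" by (simp add: card_insert_le_m1)
  finally show False using assms by simp
qed

lemma scalars_core:
  assumes sg: "subgroup Gh (GammaO :: ('k::{field,finite} vect \<Rightarrow> 'k vect) monoid)"
    and sc: "Scalars \<subseteq> Gh" and pd: "\<And>W. W \<in> D \<Longrightarrow> two_space W"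
  shows "Scalars \<subseteq> core (GammaO\<lparr>carrier := Gh\<rparr>) (decomp_stab Gh D)"
proof
  fix z assume z: "z \<in> (Scalars :: ('k vect \<Rightarrow> 'k vect) set)"
  then obtain c where c: "c \<noteq> 0" "z = smul c" by (auto simp: Scalars_def)
  have mc: "\<And>x y. x \<in> Gh \<Longrightarrow> y \<in> Gh \<Longrightarrow> x \<circ> y \<in> Gh"
    using subgroup.m_closed[OF sg] by (simp add: GammaO_def)
  have sub: "Gh \<subseteq> {g. semisim g}" using subgroup.subset[OF sg] by (simp add: GammaO_def)
  have zG: "z \<in> Gh" using z sc by blast
  have "z \<in> conjg (GammaO\<lparr>carrier := Gh\<rparr>) (decomp_stab Gh D) g" if g: "g \<in> Gh" for g
  proof -
    obtain s lam where s: "field_aut s" and ksm: "\<And>c x. g (smul c x) = smul (s c) (g x)"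
      using sub g unfolding semisim_def by blast
    have bg: "bij g" by (rule gh_inverse(3)[OF sg g])
    have fg: "finv g \<in> Gh" by (rule gh_inverse(1)[OF sg g])
    define k where "k = g \<circ> z \<circ> finv g"
    have kG: "k \<in> Gh" unfolding k_def by (intro mc g zG fg)
    have ks: "k = smul (s c)"
      unfolding k_def c(2) by (simp add: fun_eq_iff ksm fi_app bg del: smul_apply)
    have sc0: "s c \<noteq> 0" using fa_props(5)[OF s] c(1) by simp
    have "k \<in> decomp_stab Gh D"
      unfolding decomp_stab_def using kG ks smul_image[OF pd sc0] by simp
    moreover have "z = finv g \<circ> k \<circ> g"
      unfolding k_def by (simp add: fun_eq_iff fi_app bg)
    ultimately show ?thesis unfolding conjg_char[OF sg g] by blast
  qed
  then show "z \<in> core (GammaO\<lparr>carrier := Gh\<rparr>) (decomp_stab Gh D)"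
    unfolding core_def using zG by simp
qed


context hb begin

lemma stab_scalar:
  assumes sg: "subgroup Gh (GammaO :: ('k vect \<Rightarrow> 'k vect) monoid)"
    and t: "t \<noteq> 0" "\<And>x. x \<noteq> 0 \<Longrightarrow> \<exists>n. x = t ^ n"
    and hG: "h \<in> Gh" and hH: "h \<in> decomp_stab Gh D"
    and k1: "k1 \<in> decomp_stab Gh D" "k1 = phi \<circ> N1 t \<circ> finv phi \<circ> h \<circ> (phi \<circ> M1 t \<circ> finv phi)"
    and k2: "k2 \<in> decomp_stab Gh D" "k2 = phi \<circ> N2 \<circ> finv phi \<circ> h \<circ> (phi \<circ> M2 \<circ> finv phi)"
  shows "h \<in> Scalars"
proof -
  have sub: "Gh \<subseteq> {g. semisim g}" using subgroup.subset[OF sg] by (simp add: GammaO_def)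
  have ssh: "semisim h" "\<forall>W\<in>D. h ` W \<in> D" using hH sub by (auto simp: decomp_stab_def)
  have ss1: "semisim k1" "\<forall>W\<in>D. k1 ` W \<in> D" using k1(1) sub by (auto simp: decomp_stab_def)
  have ss2: "semisim k2" "\<forall>W\<in>D. k2 ` W \<in> D" using k2(1) sub by (auto simp: decomp_stab_def)
  obtain \<sigma> a \<tau> where fa: "field_aut \<sigma>" and sl: "slin (finv phi \<circ> h \<circ> phi) \<sigma>" and it: "inj \<tau>"
    and az: "\<And>q. a q \<noteq> 0" and hd: "\<And>q. (finv phi \<circ> h \<circ> phi) (dl q) = smul (a q) (dl (\<tau> q))"
    using mono[OF ssh] by blast
  obtain \<sigma>1 a1 \<tau>1 where az1: "\<And>q. a1 q \<noteq> 0" and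
    kd1: "\<And>q. (finv phi \<circ> k1 \<circ> phi) (dl q) = smul (a1 q) (dl (\<tau>1 q))"
    using mono[OF ss1] by blast
  obtain \<sigma>2 a2 \<tau>2 where az2: "\<And>q. a2 q \<noteq> 0" and
    kd2: "\<And>q. (finv phi \<circ> k2 \<circ> phi) (dl q) = smul (a2 q) (dl (\<tau>2 q))"
    using mono[OF ss2] by blast
  define ht where "ht = finv phi \<circ> h \<circ> phi"
  have bp: "bij phi" by (rule phi_bij)
  have MN1: "\<And>y. M1 t (N1 t y) = y" using M1N1(1) by (metis comp_apply id_apply)
  have MN2: "\<And>y. M2 (N2 y) = y" using M2N2(1) by (metis comp_apply id_apply)
  have rel1: "(finv phi \<circ> k1 \<circ> phi) x = N1 t (ht (M1 t x))" for x
    unfolding k1(2) ht_def by (simp add: fi_app bp)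
  have rel2: "(finv phi \<circ> k2 \<circ> phi) x = N2 (ht (M2 x))" for x
    unfolding k2(2) ht_def by (simp add: fi_app bp)
  have col1: "ht (M1 t (dl q)) = smul (a1 q) (M1 t (dl (\<tau>1 q)))" for q
  proof -
    have "ht (M1 t (dl q)) = M1 t (N1 t (ht (M1 t (dl q))))" by (simp add: MN1)
    also have "\<dots> = M1 t (smul (a1 q) (dl (\<tau>1 q)))" using kd1[of q] rel1[of "dl q"] by simp
    finally show ?thesis by (simp add: M1_lin)
  qed
  have col2: "ht (M2 (dl q)) = smul (a2 q) (M2 (dl (\<tau>2 q)))" for q
  proof -
    have "ht (M2 (dl q)) = M2 (N2 (ht (M2 (dl q))))" by (simp add: MN2)
    also have "\<dots> = M2 (smul (a2 q) (dl (\<tau>2 q)))" using kd2[of q] rel2[of "dl q"] by simp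
    finally show ?thesis by (simp add: M2_lin)
  qed
  have s0: "\<And>c. (\<sigma> c = 0) = (c = 0)" using fa_props(5)[OF fa] by blast
  have hd': "\<And>q. ht (dl q) = smul (a q) (dl (\<tau> q))" using hd unfolding ht_def .
  have sl': "slin ht \<sigma>" using sl unfolding ht_def .
  have suppt: "supp (ht y) = \<tau> ` supp y" for y by (rule supp_mono[OF sl' hd' it az s0])
  have im1: "\<tau> ` cM1 q = cM1 (\<tau>1 q)" for q
    using suppt[of "M1 t (dl q)"] col1[of q] cols1[OF t(1)] supp_smul[OF az1[of q]] by simp
  have c2: "supp ((M2::'k vect \<Rightarrow> 'k vect) (dl k)) = cM2 k" for k by (rule cols2)
  have im2: "\<tau> ` cM2 q = cM2 (\<tau>2 q)" for q
    using suppt[of "M2 (dl q)"] col2[of q] c2 supp_smul[OF az2[of q]] by simp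
  note cb = comb[OF it im1 im2]
  have hc: "ht y j = a j * \<sigma> (y j)" for y j
    using mono_coord[OF sl' hd' it, of y j] cb(1) by simp
  have E1: "a j * \<sigma> (M1 t (dl q) j) = a1 q * M1 t (dl q) j" if "\<tau>1 q = q" for q j
    using col1[of q] hc[of "M1 t (dl q)" j] that by simp
  have E2: "a j * \<sigma> (M2 (dl q) j) = a2 q * M2 (dl q) j" if "\<tau>2 q = q" for q j
    using col2[of q] hc[of "M2 (dl q)" j] that by simp
  have s1: "\<sigma> 1 = 1" and sm1: "\<sigma> (-1) = -1" using fa_props(2)[OF fa] fa_props(3)[OF fa, of 1] by simp_all
  have e: "a 1 = a1 1" "a 3 = a1 1" "a 7 = a1 1" "a 0 * \<sigma> t = a1 1 * t"
    "a 0 = a1 2" "a 2 = a1 2" "a 9 = a1 2" "a 0 = a1 6" "a 6 = a1 6" "a 3 = a1 8" "a 8 = a1 8"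
    using E1[OF cb(2), of 1] E1[OF cb(2), of 3] E1[OF cb(2), of 7] E1[OF cb(2), of 0]
      E1[OF cb(3), of 0] E1[OF cb(3), of 2] E1[OF cb(3), of 9]
      E1[OF cb(4), of 0] E1[OF cb(4), of 6] E1[OF cb(5), of 3] E1[OF cb(5), of 8]
    by (simp_all add: ent1 s1 sm1)
  have f: "a 3 = a2 3" "a 4 = a2 3" "a 6 = a2 3" "a 2 = a2 5" "a 5 = a2 5" "a 2 = a2 7" "a 7 = a2 7"
    using E2[OF cb(6), of 3] E2[OF cb(6), of 4] E2[OF cb(6), of 6] E2[OF cb(7), of 2] E2[OF cb(7), of 5]
      E2[OF cb(8), of 2] E2[OF cb(8), of 7]
    by (simp_all add: ent2 s1 sm1)
  have A2: "a 2 = a 0" using e(5,6) by simp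
  have A9: "a 9 = a 0" using e(5,7) by simp
  have A6: "a 6 = a 0" using e(8,9) by simp
  have A3: "a 3 = a 0" using f(1,3) A6 by simp
  have A4: "a 4 = a 0" using f(1,2) A3 by simp
  have A1: "a 1 = a 0" using e(1,2) A3 by simp
  have A7: "a 7 = a 0" using e(2,3) A3 by simp
  have A8: "a 8 = a 0" using e(10,11) A3 by simp
  have A5: "a 5 = a 0" using f(4,5) A2 by simp
  have allj: "a j = a 0" for j
    using x10[of j] A1 A2 A3 A4 A5 A6 A7 A8 A9 by (elim disjE) simp_all
  have "a 0 * \<sigma> t = a 0 * t" using e(4) e(2) A3 by simp
  then have st: "\<sigma> t = t" using az[of 0] by simp
  have sid: "\<sigma> x = x" for x
  proof (cases "x = 0")
    case True then show ?thesis using fa_props(1)[OF fa] by simp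
  next
    case False
    then obtain n where "x = t ^ n" using t(2) by blast
    then show ?thesis using fa_props(4)[OF fa, of t n] st by simp
  qed
  have hts: "ht y = smul (a 0) y" for y
  proof
    fix j show "ht y j = smul (a 0) y j" using hc[of y j] sid[of "y j"] allj[of j] by simp
  qed
  have "h = smul (a 0)"
  proof
    fix x
    have "h x = phi (ht (finv phi x))" unfolding ht_def by (simp add: fi_app bp)
    also have "\<dots> = smul (a 0) x" by (simp add: hts phi_smul fi_app bp del: smul_apply)
    finally show "h x = smul (a 0) x" .
  qed
  then show ?thesis using az[of 0] by (auto simp: Scalars_def)
qed

end

theorem lemma3p20:
  fixes Gh :: "('k::{field,finite} vect \<Rightarrow> 'k vect) set"
    and D :: "'k vect set set"
  assumes "CARD('k) \<ge> 8"
    and "subgroup Gh GammaO"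
    and "Omega \<subseteq> Gh" and "Scalars \<subseteq> Gh"
    and "plus_decomp D"
  shows "base_size (GammaO\<lparr>carrier := Gh\<rparr>) (decomp_stab Gh D) \<le> 3"
proof -
  note sg = assms(2)
  have pd: "card D = 5 \<and> (\<forall>W\<in>D. plus_type_2space W) \<and>
     (\<forall>W\<in>D. \<forall>W'\<in>D. W \<noteq> W' \<longrightarrow> (\<forall>x\<in>W. \<forall>y\<in>W'. Bf x y = 0)) \<and>
     (\<forall>x. \<exists>f. (\<forall>W\<in>D. f W \<in> W) \<and> x = foldr vadd (map f (SOME l. set l = D \<and> distinct l)) vzero)"
    using assms(5) unfolding plus_decomp_def .
  have cD: "card D = 5" using pd by (rule conjunct1)
  have pt: "\<And>W. W \<in> D \<Longrightarrow> plus_type_2space W" using conjunct1[OF conjunct2[OF pd]] by blast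
  have orth: "\<And>W W' x y. W \<in> D \<Longrightarrow> W' \<in> D \<Longrightarrow> W \<noteq> W' \<Longrightarrow> x \<in> W \<Longrightarrow> y \<in> W' \<Longrightarrow> Bf x y = 0"
    using conjunct1[OF conjunct2[OF conjunct2[OF pd]]] by blast
  have tsD: "\<And>W. W \<in> D \<Longrightarrow> two_space W" using pt by (simp add: plus_type_2space_def)
  have fD: "finite D" by (rule card_ge_0_finite) (simp add: cD)
  obtain \<nu>0 where "bij_betw \<nu>0 {0..<card D} D" using ex_bij_betw_nat_finite[OF fD] by blast
  then have bij: "bij_betw \<nu>0 {..<5} D" by (simp add: cD atLeast0LessThan)
  have \<nu>0D: "i < 5 \<Longrightarrow> \<nu>0 i \<in> D" for i using bij_betwE[OF bij] by simp
  have "\<forall>i. \<exists>p. i < 5 \<longrightarrow> fst p \<in> \<nu>0 i \<and> snd p \<in> \<nu>0 i \<and> Qf (fst p) = 0 \<and> Qf (snd p) = 0 \<and> Bf (fst p) (snd p) = 1"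
  proof
    fix i show "\<exists>p. i < 5 \<longrightarrow> fst p \<in> \<nu>0 i \<and> snd p \<in> \<nu>0 i \<and> Qf (fst p) = 0 \<and> Qf (snd p) = 0 \<and> Bf (fst p) (snd p) = 1"
    proof (cases "i < 5")
      case True
      then obtain e f where "e \<in> \<nu>0 i \<and> f \<in> \<nu>0 i \<and> Qf e = 0 \<and> Qf f = 0 \<and> Bf e f = 1"
        using hyp_pair[OF pt[OF \<nu>0D]] by blast
      then show ?thesis by (intro exI[of _ "(e, f)"]) simp
    qed simp
  qed
  then obtain P where P: "\<And>i. i < 5 \<Longrightarrow> fst (P i) \<in> \<nu>0 i \<and> snd (P i) \<in> \<nu>0 i \<and> Qf (fst (P i)) = 0 \<and> Qf (snd (P i)) = 0 \<and> Bf (fst (P i)) (snd (P i)) = 1"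
    by metis
  interpret hb D \<nu>0 "\<lambda>i. fst (P i)" "\<lambda>i. snd (P i)"
    by unfold_locales (use bij orth tsD P in auto)
  obtain t :: 'k where t: "t \<noteq> 0" "\<And>x. x \<noteq> 0 \<Longrightarrow> \<exists>n. x = t ^ n" using gen_exists by blast
  obtain c0 :: 'k where c0: "c0 \<noteq> 0" "c0 \<noteq> 1" using exists_c0[OF assms(1)] by blast
  define g1 where "g1 = phi \<circ> N1 t \<circ> finv phi"
  define g2 where "g2 = phi \<circ> N2 \<circ> finv phi"
  have g1G: "g1 \<in> Gh" unfolding g1_def using g1_omega[OF c0 phi_iso] assms(3) by blast
  have g2G: "g2 \<in> Gh" unfolding g2_def using g2_omega[OF c0 phi_iso] assms(3) by blast
  have idG: "id \<in> Gh" using subgroup.one_closed[OF sg] by (simp add: GammaO_def)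
  have bp: "bij phi" by (rule phi_bij)
  have MN1: "\<And>y. M1 t (N1 t y) = y" "\<And>y. N1 t (M1 t y) = y" using M1N1 by (metis comp_apply id_apply)+
  have MN2: "\<And>y. M2 (N2 y) = y" "\<And>y. N2 (M2 y) = y" using M2N2 by (metis comp_apply id_apply)+
  have fg1: "finv g1 = phi \<circ> M1 t \<circ> finv phi"
    unfolding g1_def by (rule inv_unique_comp) (simp_all add: fun_eq_iff fi_app bp MN1)
  have fg2: "finv g2 = phi \<circ> M2 \<circ> finv phi"
    unfolding g2_def by (rule inv_unique_comp) (simp_all add: fun_eq_iff fi_app bp MN2)
  have bg1: "bij g1" by (rule gh_inverse(3)[OF sg g1G])
  have bg2: "bij g2" by (rule gh_inverse(3)[OF sg g2G])
  define S where "S = set [id, g1, g2]"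
  let ?G = "GammaO\<lparr>carrier := Gh\<rparr>"
  let ?H = "decomp_stab Gh D"
  have SG: "S \<subseteq> Gh" using idG g1G g2G by (simp add: S_def)
  have main: "Gh \<inter> (\<Inter>g\<in>S. conjg ?G ?H g) \<subseteq> Scalars"
  proof
    fix h assume h: "h \<in> Gh \<inter> (\<Inter>g\<in>S. conjg ?G ?H g)"
    have hG: "h \<in> Gh" using h by blast
    have "h \<in> conjg ?G ?H id" using h by (simp add: S_def)
    then obtain k0 where "k0 \<in> ?H" "h = finv id \<circ> k0 \<circ> id" unfolding conjg_char[OF sg idG] by blast
    then have hH: "h \<in> ?H" by (simp add: inv_id)
    have "h \<in> conjg ?G ?H g1" using h by (simp add: S_def)
    then obtain k1 where k1: "k1 \<in> ?H" "h = finv g1 \<circ> k1 \<circ> g1" unfolding conjg_char[OF sg g1G] by blast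
    have k1e: "k1 = g1 \<circ> h \<circ> finv g1" unfolding k1(2) by (simp add: fun_eq_iff fi_app bg1)
    have "h \<in> conjg ?G ?H g2" using h by (simp add: S_def)
    then obtain k2 where k2: "k2 \<in> ?H" "h = finv g2 \<circ> k2 \<circ> g2" unfolding conjg_char[OF sg g2G] by blast
    have k2e: "k2 = g2 \<circ> h \<circ> finv g2" unfolding k2(2) by (simp add: fun_eq_iff fi_app bg2)
    show "h \<in> Scalars"
      by (rule stab_scalar[OF sg t hG hH k1(1) _ k2(1)])
        (simp_all only: k1e k2e fg1 fg2, simp_all add: g1_def g2_def comp_assoc)
  qed
  have core_eq: "Gh \<inter> (\<Inter>g\<in>S. conjg ?G ?H g) = core ?G ?H"
  proof
    show "Gh \<inter> (\<Inter>g\<in>S. conjg ?G ?H g) \<subseteq> core ?G ?H"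
      using main scalars_core[OF sg assms(4) tsD] by blast
    show "core ?G ?H \<subseteq> Gh \<inter> (\<Inter>g\<in>S. conjg ?G ?H g)"
      unfolding core_def using SG by auto
  qed
  have "\<exists>S'. S' \<subseteq> carrier ?G \<and> finite S' \<and> card S' = card S \<and> carrier ?G \<inter> (\<Inter>g\<in>S'. conjg ?G ?H g) = core ?G ?H"
    using SG core_eq by (intro exI[of _ S]) (simp add: S_def)
  then have "base_size ?G ?H \<le> card S" unfolding base_size_def by (rule Least_le)
  also have "card S \<le> 3" unfolding S_def using card_length[of "[id, g1, g2]"] by simp
  finally show ?thesis .
qed


end
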